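(* Let $\alpha:\mathbb Z_+\times\mathbb Z_+\to\mathbb R$ be defined by $\alpha(0,s)=0$ for all $s\in\mathbb Z_+$ and, for $n\in\mathbb Z_+$, \[ \alpha(n+1,0)=\frac2{N^2}+\alpha(n,0)+\frac2{N^2}\sum_{s=1}^\infty\alpha(n,s)\mathrm{tr}(Q^s),\qquad \alpha(n+1,1)=-\frac2{N^2}+\frac{N-2}N\alpha(n,1)-\frac2{N^2}\sum_{s=1}^\infty\alpha(n,s)\mathrm{tr}(Q^s), \] \[ \alpha(n+1,s)=\frac{N-2}N\alpha(n,s)+\frac2N\alpha(n,s-1),\quad s\ge2 \] (so $\alpha(n,s)=0$ for $s\ge n+1$ and all sums are finite). Then \[ L_0^n(J)=J+\sum_{s=0}^\infty\alpha(n,s)Q^s\qquad\text{for all }n\in\mathbb Z_+. \] Moreover, if $Q$ is walk-regular, then $L^n(J)=L_0^n(J)=J+\sum_{s=0}^\infty\alpha(n,s)Q^s$ for all $n\in\mathbb N$.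
   Context: $E$ is a finite set with $N=\#E>8$ elements, listed in a fixed order; $\mathsf M_E$ is the space of complex $N\times N$ matrices indexed by $E\times E$. $|x\rangle$ (resp. $\langle x|$) is the column (resp. row) vector with 1 in coordinate $x$ and 0 elsewhere; $C^*$ denotes transpose. $Q$ is an irreducible stochastic matrix on $E$ with $Q(x,y)=Q(y,x)$ for all $x,y$ and $\mathrm{tr}(Q)=0$. $I$ is the identity and $J$ the matrix with all entries $1/N$. $Q$ is walk-regular if $Q^s(x,x)$ does not depend on $x\in E$ for every $s\in\mathbb Z_+$. Let $(U,V)$ be a random pair in $E\times E$ with $\mathbb P(U=x,V=y)=\frac1NQ(x,y)$ and $T=I-|U\rangle\langle U|+|U\rangle\langle V|$; the linear operator $L:\mathsf M_E\to\mathsf M_E$ is $L(C)=\mathbb E[T^*CT]$. The linear operator $L_0:\mathsf M_E\to\mathsf M_E$ is \[ L_0(C)=\frac{N-2}NC+\frac1N(CQ+QC)-\frac{2\,\mathrm{tr}(C)}{N^2}Q+\frac{2\,\mathrm{tr}(C)}{N^2}I. \] Powers $L^n$, $L_0^n$ denote $n$-fold composition ($L^0=L_0^0=$ identity). *)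

theory Defs
  imports "HOL-Analysis.Analysis"
begin

text \<open>Matrices indexed by a finite type 'e (the set E, in its fixed enumeration).
  Matrix product is (**), identity is mat 1, transpose is transpose, trace is trace.\<close>

primrec mpow :: "'a::semiring_1^'n^'n \<Rightarrow> nat \<Rightarrow> 'a^'n^'n" where
  "mpow A 0 = mat 1"
| "mpow A (Suc k) = A ** mpow A k"

definition cmat :: "real^'n^'m \<Rightarrow> complex^'n^'m" where
  "cmat A = (\<chi> i j. complex_of_real (A $ i $ j))"

definition smat :: "complex \<Rightarrow> complex^'n^'m \<Rightarrow> complex^'n^'m" where
  "smat c A = (\<chi> i j. c * A $ i $ j)"

definition ketbra :: "'e::finite \<Rightarrow> 'e \<Rightarrow> complex^'e^'e" where
  "ketbra x y = (\<chi> i j. if i = x \<and> j = y then 1 else 0)"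

definition stochastic :: "real^'e^'e \<Rightarrow> bool" where
  "stochastic Q \<longleftrightarrow> (\<forall>x y. Q $ x $ y \<ge> 0) \<and> (\<forall>x. (\<Sum>y\<in>UNIV. Q $ x $ y) = 1)"

definition irreducible_mat :: "real^'e^'e \<Rightarrow> bool" where
  "irreducible_mat Q \<longleftrightarrow> (\<forall>x y. \<exists>s. mpow Q s $ x $ y > 0)"

definition walk_regular :: "real^'e^'e \<Rightarrow> bool" where
  "walk_regular Q \<longleftrightarrow> (\<forall>s x y. mpow Q s $ x $ x = mpow Q s $ y $ y)"

definition Jmat :: "complex^'e^'e" where
  "Jmat = (\<chi> i j. 1 / of_nat CARD('e))"

definition Tmat :: "'e::finite \<Rightarrow> 'e \<Rightarrow> complex^'e^'e" where
  "Tmat u v = mat 1 - ketbra u u + ketbra u v"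

text \<open>L(C) = E[T^* C T] where P(U=x,V=y) = Q(x,y)/N; the expectation over the finite
  space E x E written out as a weighted sum.\<close>
definition Lop :: "real^'e^'e \<Rightarrow> complex^'e^'e \<Rightarrow> complex^'e^'e" where
  "Lop Q C = (\<Sum>x\<in>UNIV. \<Sum>y\<in>UNIV.
      smat (complex_of_real (Q $ x $ y / real CARD('e))) (transpose (Tmat x y) ** C ** Tmat x y))"

definition L0op :: "real^'e^'e \<Rightarrow> complex^'e^'e \<Rightarrow> complex^'e^'e" where
  "L0op Q C = (let N = of_nat CARD('e) :: complex in
      smat ((N - 2) / N) C + smat (1 / N) (C ** cmat Q + cmat Q ** C)
      - smat (2 * trace C / N^2) (cmat Q) + smat (2 * trace C / N^2) (mat 1))"

primrec alpha :: "real^'e^'e \<Rightarrow> nat \<Rightarrow> nat \<Rightarrow> real" where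
  "alpha Q 0 = (\<lambda>s. 0)"
| "alpha Q (Suc n) = (let N = real CARD('e);
      S = (\<Sum>s. alpha Q n (Suc s) * trace (mpow Q (Suc s))) in
      (\<lambda>s. if s = 0 then 2 / N^2 + alpha Q n 0 + 2 / N^2 * S
           else if s = 1 then - 2 / N^2 + (N - 2) / N * alpha Q n 1 - 2 / N^2 * S
           else (N - 2) / N * alpha Q n s + 2 / N * alpha Q n (s - 1)))"

end

theory Submission
  imports Defs
begin

lemma mm_scaleR_right: "(A::complex^'n^'m) ** (r *\<^sub>R B) = r *\<^sub>R (A ** B)"
  by (simp add: matrix_matrix_mult_def vec_eq_iff scaleR_sum_right)

lemma mm_scaleR_left: "(r *\<^sub>R (A::complex^'n^'m)) ** B = r *\<^sub>R (A ** B)"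
  by (simp add: scalar_matrix_assoc)

lemma mm_rdistrib: "((A::complex^'n^'m) + B) ** C = A ** C + B ** C"
  by (vector matrix_matrix_mult_def sum.distrib[symmetric] field_simps)

lemma mm_sum_right: "finite S \<Longrightarrow> (A::complex^'n^'m) ** sum f S = (\<Sum>s\<in>S. A ** f s)"
  by (induction S rule: finite_induct) (auto simp: matrix_add_ldistrib)

lemma mm_sum_left: "finite S \<Longrightarrow> sum f S ** (A::complex^'n^'m) = (\<Sum>s\<in>S. f s ** A)"
  by (induction S rule: finite_induct) (auto simp: mm_rdistrib)

lemma trace_sum: "trace (sum f S :: complex^'n^'n) = (\<Sum>s\<in>S. trace (f s))"
  unfolding trace_def by (simp add: sum_component sum.swap[of _ S])

lemma scaleR_entry: "(r *\<^sub>R (A :: complex^'n^'m)) $ i $ j = of_real r * A $ i $ j"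
  by (simp only: vector_scaleR_component) (simp add: scaleR_conv_of_real)

lemma trace_scaleR: "trace (r *\<^sub>R (A :: complex^'n^'n)) = of_real r * trace A"
  unfolding trace_def by (simp only: scaleR_entry sum_distrib_left)

lemma cmat_mult: "cmat ((A::real^'n^'n) ** B) = cmat A ** cmat B"
  by (simp add: cmat_def matrix_matrix_mult_def vec_eq_iff)

lemma cmat_one: "cmat (mat 1 :: real^'n^'n) = mat 1"
  by (simp add: cmat_def mat_def vec_eq_iff)

lemma mpow_cmat: "mpow (cmat (Q::real^'n^'n)) s = cmat (mpow Q s)"
  by (induction s) (auto simp: cmat_one cmat_mult)

lemma trace_cmat: "trace (cmat (A::real^'n^'n)) = of_real (trace A)"
  by (simp add: trace_def cmat_def)

lemma mpow_comm: "mpow A k ** A = A ** mpow (A::'a::semiring_1^'n^'n) k"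
  by (induction k) (auto simp: matrix_mul_assoc[symmetric])

lemma smat_real: "smat (complex_of_real r) A = r *\<^sub>R A"
  by (simp only: smat_def vec_eq_iff scaleR_entry vec_lambda_beta) simp

lemma Tmat_entry: "Tmat x y $ a $ b = (if a = b then 1 else 0) - (if a = x \<and> b = x then 1 else 0) + (if a = x \<and> b = y then 1 else 0)"
  by (simp add: Tmat_def ketbra_def mat_def)

lemma TC_entry: "(transpose (Tmat x y) ** C) $ i $ b = C $ i $ b + ((if i = y then 1 else 0) - (if i = x then 1 else 0)) * C $ x $ b"
proof -
  have "(transpose (Tmat x y) ** C) $ i $ b = (\<Sum>k\<in>UNIV. ((if k = i then 1 else 0) - (if k = x \<and> i = x then 1 else 0) + (if k = x \<and> i = y then 1 else 0)) * C $ k $ b)"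
    by (simp add: matrix_matrix_mult_def transpose_def Tmat_entry)
  also have "\<dots> = (\<Sum>k\<in>UNIV. (if k = i then C $ k $ b else 0) - (if k = x then (if i = x then C $ x $ b else 0) else 0) + (if k = x then (if i = y then C $ x $ b else 0) else 0))"
    by (rule sum.cong) (auto simp: algebra_simps)
  also have "\<dots> = C $ i $ b + ((if i = y then 1 else 0) - (if i = x then 1 else 0)) * C $ x $ b"
    by (simp add: sum.distrib sum_subtractf)
  finally show ?thesis .
qed

lemma CT_entry: "(D ** Tmat x y) $ i $ j = D $ i $ j + ((if j = y then 1 else 0) - (if j = x then 1 else 0)) * D $ i $ x"
proof -
  have "(D ** Tmat x y) $ i $ j = (\<Sum>k\<in>UNIV. D $ i $ k * ((if k = j then 1 else 0) - (if k = x \<and> j = x then 1 else 0) + (if k = x \<and> j = y then 1 else 0)))"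
    by (simp add: matrix_matrix_mult_def Tmat_entry)
  also have "\<dots> = (\<Sum>k\<in>UNIV. (if k = j then D $ i $ k else 0) - (if k = x then (if j = x then D $ i $ x else 0) else 0) + (if k = x then (if j = y then D $ i $ x else 0) else 0))"
    by (rule sum.cong) (auto simp: algebra_simps)
  also have "\<dots> = D $ i $ j + ((if j = y then 1 else 0) - (if j = x then 1 else 0)) * D $ i $ x"
    by (simp add: sum.distrib sum_subtractf)
  finally show ?thesis .
qed

lemma sum_if_const: "(\<Sum>y\<in>A. if P then g y else 0) = (if P then sum g A else (0::'a::comm_monoid_add))"
  by (cases P) auto

lemma key_sum:
  fixes q :: "'e::finite \<Rightarrow> 'e \<Rightarrow> complex" and C :: "complex^'e^'e"
  assumes row: "\<And>x. (\<Sum>y\<in>UNIV. q x y) = 1" and sym: "\<And>x y. q x y = q y x"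
    and diag: "\<And>x. C$x$x = c"
  shows "(\<Sum>x\<in>UNIV. \<Sum>y\<in>UNIV. q x y * (C$i$j + ((if i = y then 1 else 0) - (if i = x then 1 else 0)) * C$x$j
      + ((if j = y then 1 else 0) - (if j = x then 1 else 0)) * (C$i$x + ((if i = y then 1 else 0) - (if i = x then 1 else 0)) * C$x$x)))
    = of_nat CARD('e) * C$i$j + (\<Sum>x\<in>UNIV. q i x * C$x$j) - C$i$j + (\<Sum>x\<in>UNIV. C$i$x * q x j) - C$i$j
      + c * (2 * (if i = j then 1 else 0) - 2 * q i j)"
proof -
  have e: "q x y * (C$i$j + ((if i = y then 1 else 0) - (if i = x then 1 else 0)) * C$x$j
      + ((if j = y then 1 else 0) - (if j = x then 1 else 0)) * (C$i$x + ((if i = y then 1 else 0) - (if i = x then 1 else 0)) * C$x$x))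
    = q x y * C$i$j + (if y = i then q x i * C$x$j else 0) - (if x = i then q i y * C$i$j else 0)
      + (if y = j then q x j * C$i$x else 0) - (if x = j then q j y * C$i$j else 0)
      + (if y = i then (if i = j then q x i * c else 0) else 0)
      - (if x = i then (if y = j then q i j * c else 0) else 0)
      - (if x = j then (if y = i then q i j * c else 0) else 0)
      + (if x = i then (if i = j then q i y * c else 0) else 0)" for x y
    using diag[of x] sym[of j i] by (auto simp: algebra_simps)
  have r2: "(\<Sum>x\<in>UNIV. q x i) = 1" for i using row[of i] sym by simp
  show ?thesis
    apply (simp only: e sum.distrib sum_subtractf)
    apply (simp add: sum_if_const row r2 sum_distrib_right[symmetric] sym[of _ i] mult.commute)
    apply (simp add: sum_distrib_left[symmetric] row r2 algebra_simps)
    done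
qed

lemma Lop_eq_L0op:
  fixes Q :: "real^'e^'e" and C :: "complex^'e^'e"
  assumes st: "stochastic Q" and sy: "\<forall>x y. Q $ x $ y = Q $ y $ x"
    and diag: "\<And>x. C$x$x = c"
  shows "Lop Q C = L0op Q C"
proof -
  define q where "q x y = complex_of_real (Q$x$y)" for x y
  define N where "N = (of_nat CARD('e) :: complex)"
  have N0: "N \<noteq> 0" unfolding N_def by simp
  have row: "(\<Sum>y\<in>UNIV. q x y) = 1" for x
    using st unfolding stochastic_def q_def by (metis of_real_1 of_real_sum)
  have sym: "q x y = q y x" for x y using sy q_def by simp
  have tr: "trace C = N * c" by (simp add: trace_def diag N_def)
  have Qc: "cmat Q $ i $ j = q i j" for i j by (simp add: cmat_def q_def)
  have mm: "(A ** B) $ i $ j = (\<Sum>k\<in>UNIV. A$i$k * B$k$j)" for A B :: "complex^'e^'e" and i j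
    by (simp add: matrix_matrix_mult_def)
  show ?thesis
  proof (simp only: vec_eq_iff, intro allI)
    fix i j
    have "Lop Q C $ i $ j = (\<Sum>x\<in>UNIV. \<Sum>y\<in>UNIV. (q x y / N) * (C$i$j + ((if i = y then 1 else 0) - (if i = x then 1 else 0)) * C$x$j
      + ((if j = y then 1 else 0) - (if j = x then 1 else 0)) * (C$i$x + ((if i = y then 1 else 0) - (if i = x then 1 else 0)) * C$x$x)))"
      by (simp add: Lop_def smat_def CT_entry TC_entry q_def N_def)
    also have "\<dots> = (1/N) * (\<Sum>x\<in>UNIV. \<Sum>y\<in>UNIV. q x y * (C$i$j + ((if i = y then 1 else 0) - (if i = x then 1 else 0)) * C$x$j
      + ((if j = y then 1 else 0) - (if j = x then 1 else 0)) * (C$i$x + ((if i = y then 1 else 0) - (if i = x then 1 else 0)) * C$x$x)))"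
      by (simp add: sum_distrib_left)
    also have "\<dots> = (1/N) * (N * C$i$j + (\<Sum>x\<in>UNIV. q i x * C$x$j) - C$i$j + (\<Sum>x\<in>UNIV. C$i$x * q x j) - C$i$j
      + c * (2 * (if i = j then 1 else 0) - 2 * q i j))"
      using key_sum[of q C c i j, OF row sym diag] by (simp add: N_def)
    also have "\<dots> = L0op Q C $ i $ j"
      using N0 by (simp add: L0op_def Let_def smat_def tr mm Qc mat_def N_def[symmetric] field_simps power2_eq_square)
    finally show "Lop Q C $ i $ j = L0op Q C $ i $ j" .
  qed
qed

lemma alpha_zero: "n < s \<Longrightarrow> alpha Q n s = 0"
proof (induction n arbitrary: s)
  case 0 then show ?case by simp
next
  case (Suc n)
  then have "s \<noteq> 0" "s \<noteq> 1" "n < s" "n < s - 1" by auto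
  with Suc.IH show ?case by (simp add: Let_def)
qed

lemma S_finite: "(\<Sum>s. alpha Q n (Suc s) * trace (mpow Q (Suc s))) = (\<Sum>s<n. alpha Q n (Suc s) * trace (mpow Q (Suc s)))"
  by (rule suminf_finite) (auto simp: alpha_zero)

lemma sum_alpha: "n < K \<Longrightarrow> (\<Sum>s. alpha Q n s *\<^sub>R (M s :: 'a::real_normed_vector)) = (\<Sum>s<K. alpha Q n s *\<^sub>R M s)"
  by (rule suminf_finite) (auto simp: alpha_zero)

lemma alpha_Suc_expand:
  fixes Q :: "real^'e^'e" and n :: nat
  defines "N \<equiv> real CARD('e)"
  defines "t \<equiv> 2 / N^2 + 2 * alpha Q n 0 / N + 2 / N^2 * (\<Sum>s. alpha Q n (Suc s) * trace (mpow Q (Suc s)))"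
  shows "alpha Q (Suc n) s = (N - 2) / N * alpha Q n s + (if s = 0 then 0 else 2 / N * alpha Q n (s - 1))
     + (if s = 0 then t else 0) - (if s = 1 then t else 0)"
proof -
  have N0: "N \<noteq> 0" unfolding N_def by simp
  show ?thesis
    using N0 by (auto simp: Let_def t_def N_def[symmetric] field_simps)
qed

lemma J_Q:
  assumes st: "stochastic Q" and sy: "\<forall>x y. Q $ x $ y = Q $ y $ x"
  shows "Jmat ** cmat Q = Jmat" "cmat Q ** Jmat = Jmat"
proof -
  have row: "(\<Sum>y\<in>UNIV. complex_of_real (Q $ x $ y)) = 1" for x
    using st unfolding stochastic_def by (metis of_real_1 of_real_sum)
  have col: "(\<Sum>y\<in>UNIV. complex_of_real (Q $ y $ x)) = 1" for x
    using row[of x] sy by simp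
  show "Jmat ** cmat Q = Jmat"
    by (simp add: vec_eq_iff matrix_matrix_mult_def Jmat_def cmat_def sum_divide_distrib[symmetric] col)
  show "cmat Q ** Jmat = Jmat"
    by (simp add: vec_eq_iff matrix_matrix_mult_def Jmat_def cmat_def sum_divide_distrib[symmetric] row)
qed

lemma trace_J: "trace (Jmat :: complex^'e^'e) = 1"
  by (simp add: trace_def Jmat_def)

lemma L0op_formula:
  fixes Q :: "real^'e^'e"
  assumes "trace C = complex_of_real T"
  shows "L0op Q C = ((real CARD('e) - 2) / real CARD('e)) *\<^sub>R C + (1 / real CARD('e)) *\<^sub>R (C ** cmat Q + cmat Q ** C)
     - (2 * T / (real CARD('e))^2) *\<^sub>R cmat Q + (2 * T / (real CARD('e))^2) *\<^sub>R mat 1"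
proof -
  have a: "(of_nat CARD('e) - 2) / of_nat CARD('e) = complex_of_real ((real CARD('e) - 2) / real CARD('e))" by simp
  have b: "1 / of_nat CARD('e) = complex_of_real (1 / real CARD('e))" by simp
  have c: "2 * trace C / (of_nat CARD('e))^2 = complex_of_real (2 * T / (real CARD('e))^2)" by (simp add: assms)
  show ?thesis unfolding L0op_def Let_def a b c smat_real ..
qed

lemma sum_delta_scale:
  fixes k K :: nat
  assumes "k < K"
  shows "(\<Sum>s<K. (if s = k then t else 0) *\<^sub>R (f s :: 'a::real_vector)) = t *\<^sub>R f k"
proof -
  have "(\<Sum>s<K. (if s = k then t else 0) *\<^sub>R f s) = (\<Sum>s<K. if s = k then t *\<^sub>R f k else 0)"
    by (rule sum.cong) auto
  also have "\<dots> = t *\<^sub>R f k" using assms by (simp only: sum.delta[OF finite_lessThan]) simp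
  finally show ?thesis .
qed

lemma L0_step:
  fixes Q :: "real^'e^'e"
  assumes st: "stochastic Q" and sy: "\<forall>x y. Q $ x $ y = Q $ y $ x"
  shows "L0op Q (Jmat + (\<Sum>s. alpha Q n s *\<^sub>R mpow (cmat Q) s)) = Jmat + (\<Sum>s. alpha Q (Suc n) s *\<^sub>R mpow (cmat Q) s)"
proof -
  define a where "a = alpha Q n"
  define M where "M = mpow (cmat Q)"
  define N where "N = real CARD('e)"
  define S where "S = (\<Sum>s. alpha Q n (Suc s) * trace (mpow Q (Suc s)))"
  define T where "T = 1 + N * a 0 + S"
  define t where "t = 2 / N^2 + 2 * alpha Q n 0 / N + 2 / N^2 * S"
  define P where "P = (\<Sum>s<Suc (Suc n). a s *\<^sub>R M s)"
  define R where "R = (\<Sum>s<Suc (Suc n). a s *\<^sub>R M (Suc s))"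
  have N0: "N \<noteq> 0" unfolding N_def by simp
  have tT: "t = 2 * T / N^2" unfolding t_def T_def a_def using N0 by (simp add: field_simps power2_eq_square)
  have P: "(\<Sum>s. alpha Q n s *\<^sub>R mpow (cmat Q) s) = P"
    unfolding P_def a_def M_def by (rule sum_alpha) simp
  have az: "a (Suc n) = 0" unfolding a_def by (simp add: alpha_zero)
  have Sf: "S = (\<Sum>s<Suc n. a (Suc s) * trace (mpow Q (Suc s)))"
    unfolding S_def a_def by (rule suminf_finite) (auto simp: alpha_zero)
  have trP: "trace P = complex_of_real (\<Sum>s<Suc (Suc n). a s * trace (mpow Q s))"
    unfolding P_def M_def by (simp only: trace_sum trace_scaleR mpow_cmat trace_cmat of_real_sum of_real_mult)
  have "(\<Sum>s<Suc (Suc n). a s * trace (mpow Q s)) = a 0 * N + S"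
    unfolding Sf by (subst sum.lessThan_Suc_shift) (simp add: trace_I N_def)
  then have trC: "trace (Jmat + P) = complex_of_real T"
    by (simp add: trace_add trace_J trP T_def algebra_simps)
  have MQ: "M s ** cmat Q = M (Suc s)" "cmat Q ** M s = M (Suc s)" for s
    unfolding M_def by (simp_all add: mpow_comm)
  have PQ: "P ** cmat Q = R" "cmat Q ** P = R"
    unfolding P_def R_def by (simp_all only: finite_lessThan mm_sum_left mm_sum_right mm_scaleR_left mm_scaleR_right MQ)
  have CQ: "(Jmat + P) ** cmat Q = Jmat + R" "cmat Q ** (Jmat + P) = Jmat + R"
    using J_Q[OF st sy] PQ by (simp_all add: mm_rdistrib matrix_add_ldistrib)
  have L: "L0op Q (Jmat + P) = ((N - 2) / N) *\<^sub>R (Jmat + P) + (1 / N) *\<^sub>R ((Jmat + R) + (Jmat + R))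
     - t *\<^sub>R cmat Q + t *\<^sub>R mat 1"
    using L0op_formula[OF trC, of Q] unfolding CQ N_def[symmetric] tT .
  have RHS1: "(\<Sum>s. alpha Q (Suc n) s *\<^sub>R mpow (cmat Q) s) = (\<Sum>s<Suc (Suc n). alpha Q (Suc n) s *\<^sub>R M s)"
    unfolding M_def by (rule sum_alpha) simp
  have exp: "alpha Q (Suc n) s = (N - 2) / N * a s + (if s = 0 then 0 else 2 / N * a (s - 1))
     + (if s = 0 then t else 0) - (if s = 1 then t else 0)" for s
    unfolding a_def N_def t_def S_def by (rule alpha_Suc_expand)
  have X1: "(\<Sum>s<Suc (Suc n). (if s = 0 then 0 else 2 / N * a (s - 1)) *\<^sub>R M s) = (2 / N) *\<^sub>R R"
  proof -
    have "(\<Sum>s<Suc (Suc n). (if s = 0 then 0 else 2 / N * a (s - 1)) *\<^sub>R M s)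
        = (\<Sum>s<Suc n. (2 / N * a s) *\<^sub>R M (Suc s))"
      by (subst sum.lessThan_Suc_shift) simp
    also have "\<dots> = (2 / N) *\<^sub>R R"
      unfolding R_def sum.lessThan_Suc[of _ "Suc n"] az scale_zero_left add_0_right scaleR_sum_right scaleR_scaleR
      by (rule refl)
    finally show ?thesis .
  qed
  have X2: "(\<Sum>s<Suc (Suc n). (if s = 0 then t else 0) *\<^sub>R M s) = t *\<^sub>R mat 1"
    by (subst sum_delta_scale) (simp_all add: M_def)
  have X3: "(\<Sum>s<Suc (Suc n). (if s = 1 then t else 0) *\<^sub>R M s) = t *\<^sub>R cmat Q"
    by (subst sum_delta_scale) (simp_all add: M_def)
  have RHS: "(\<Sum>s<Suc (Suc n). alpha Q (Suc n) s *\<^sub>R M s) = ((N - 2) / N) *\<^sub>R P + (2 / N) *\<^sub>R R + t *\<^sub>R mat 1 - t *\<^sub>R cmat Q"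
  proof -
    have "(\<Sum>s<Suc (Suc n). alpha Q (Suc n) s *\<^sub>R M s) = (\<Sum>s<Suc (Suc n). ((N - 2) / N * a s) *\<^sub>R M s
       + (if s = 0 then 0 else 2 / N * a (s - 1)) *\<^sub>R M s + (if s = 0 then t else 0) *\<^sub>R M s - (if s = 1 then t else 0) *\<^sub>R M s)"
      by (rule sum.cong) (simp_all only: exp scaleR_add_left scaleR_diff_left)
    also have "\<dots> = (\<Sum>s<Suc (Suc n). ((N - 2) / N * a s) *\<^sub>R M s)
       + (\<Sum>s<Suc (Suc n). (if s = 0 then 0 else 2 / N * a (s - 1)) *\<^sub>R M s) + (\<Sum>s<Suc (Suc n). (if s = 0 then t else 0) *\<^sub>R M s) - (\<Sum>s<Suc (Suc n). (if s = 1 then t else 0) *\<^sub>R M s)"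
      by (simp only: sum.distrib sum_subtractf)
    also have "(\<Sum>s<Suc (Suc n). ((N - 2) / N * a s) *\<^sub>R M s) = ((N - 2) / N) *\<^sub>R P"
      unfolding P_def scaleR_sum_right scaleR_scaleR ..
    finally show ?thesis unfolding X1 X2 X3 .
  qed
  have JJ: "((N - 2) / N) *\<^sub>R Jmat + (2 / N) *\<^sub>R Jmat = (Jmat :: complex^'e^'e)"
  proof -
    have "((N - 2) / N) *\<^sub>R Jmat + (2 / N) *\<^sub>R Jmat = ((N - 2) / N + 2 / N) *\<^sub>R (Jmat :: complex^'e^'e)"
      by (simp add: scaleR_add_left)
    also have "(N - 2) / N + 2 / N = 1" using N0 by (simp add: field_simps)
    finally show ?thesis by simp
  qed
  have h: "(1/N) *\<^sub>R (X + X) = (2/N) *\<^sub>R X" for X :: "complex^'e^'e"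
    unfolding scaleR_2[symmetric] scaleR_scaleR by simp
  have "L0op Q (Jmat + P) = (((N - 2) / N) *\<^sub>R Jmat + (2 / N) *\<^sub>R Jmat) + (((N - 2) / N) *\<^sub>R P + (2 / N) *\<^sub>R R + t *\<^sub>R mat 1 - t *\<^sub>R cmat Q)"
    unfolding L h unfolding scaleR_add_right by (simp only: add_ac diff_conv_add_uminus)
  then show ?thesis unfolding JJ P RHS1 RHS .
qed

theorem lemma3p1:
  fixes Q :: "real^'e^'e"
  assumes "CARD('e) > 8"
    and "stochastic Q"
    and "irreducible_mat Q"
    and "\<forall>x y. Q $ x $ y = Q $ y $ x"
    and "trace Q = 0"
  shows "(\<forall>n. (L0op Q ^^ n) Jmat = Jmat + (\<Sum>s. alpha Q n s *\<^sub>R mpow (cmat Q) s))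
    \<and> (walk_regular Q \<longrightarrow>
        (\<forall>n. (Lop Q ^^ n) Jmat = (L0op Q ^^ n) Jmat
           \<and> (Lop Q ^^ n) Jmat = Jmat + (\<Sum>s. alpha Q n s *\<^sub>R mpow (cmat Q) s)))"
proof -
  note st = assms(2) and sy = assms(4)
  have P1: "(L0op Q ^^ n) Jmat = Jmat + (\<Sum>s. alpha Q n s *\<^sub>R mpow (cmat Q) s)" for n
  proof (induction n)
    case 0 then show ?case by simp
  next
    case (Suc n) then show ?case using L0_step[OF st sy, of n] by simp
  qed
  have P2: "(Lop Q ^^ n) Jmat = (L0op Q ^^ n) Jmat" if wr: "walk_regular Q" for n
  proof (induction n)
    case 0 then show ?case by simp
  next
    case (Suc n)
    define C where "C = (L0op Q ^^ n) Jmat"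
    have ent: "C $ x $ x = 1 / of_nat CARD('e) + (\<Sum>s<Suc n. complex_of_real (alpha Q n s) * complex_of_real (mpow Q s $ x $ x))" for x
      unfolding C_def P1 sum_alpha[of n "Suc n", OF lessI]
      by (simp only: vector_add_component sum_component scaleR_entry mpow_cmat) (simp add: cmat_def Jmat_def)
    have diag: "C $ x $ x = C $ y $ y" for x y
      unfolding ent using wr unfolding walk_regular_def by metis
    have "(Lop Q ^^ Suc n) Jmat = Lop Q C" using Suc by (simp add: C_def)
    also have "\<dots> = L0op Q C" by (rule Lop_eq_L0op[OF st sy diag])
    finally show ?case by (simp add: C_def)
  qed
  show ?thesis using P1 P2 by simp
qed

end
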